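(* Let $G$ and $H$ be finite simple connected graphs, each of order at least $2$. If the Cartesian product $G \,\square\, H$ is well-dominated, then $\gamma(G \,\square\, H)=\gamma(G)\cdot n(H)=\gamma(H)\cdot n(G)$.
   Context: $n(X)$ is the order of $X$ and $\gamma(X)$ its domination number. A graph is well-dominated if every minimal (with respect to inclusion) dominating set is a minimum dominating set. The Cartesian product $G\,\square\, H$ has vertex set $V(G)\times V(H)$, with $(g_1,h_1)$ adjacent to $(g_2,h_2)$ iff either ($g_1=g_2$ and $h_1h_2\in E(H)$) or ($h_1=h_2$ and $g_1g_2\in E(G)$). *)

theory Defs
  imports Main
begin

definition simple_graph :: "'a set \<Rightarrow> ('a \<times> 'a) set \<Rightarrow> bool" where
  "simple_graph V E \<longleftrightarrow> finite V \<and> E \<subseteq> V \<times> V \<and> sym E \<and> (\<forall>v. (v, v) \<notin> E)"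

definition connected_graph :: "'a set \<Rightarrow> ('a \<times> 'a) set \<Rightarrow> bool" where
  "connected_graph V E \<longleftrightarrow> V \<noteq> {} \<and> (\<forall>u\<in>V. \<forall>v\<in>V. (u, v) \<in> E\<^sup>*)"

definition dominating_set :: "'a set \<Rightarrow> ('a \<times> 'a) set \<Rightarrow> 'a set \<Rightarrow> bool" where
  "dominating_set V E D \<longleftrightarrow> D \<subseteq> V \<and> (\<forall>v\<in>V. v \<in> D \<or> (\<exists>u\<in>D. (u, v) \<in> E))"

definition minimal_dominating_set :: "'a set \<Rightarrow> ('a \<times> 'a) set \<Rightarrow> 'a set \<Rightarrow> bool" where
  "minimal_dominating_set V E D \<longleftrightarrow>
     dominating_set V E D \<and> (\<forall>D'. D' \<subset> D \<longrightarrow> \<not> dominating_set V E D')"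

definition domination_number :: "'a set \<Rightarrow> ('a \<times> 'a) set \<Rightarrow> nat" where
  "domination_number V E = (LEAST k. \<exists>D. dominating_set V E D \<and> card D = k)"

definition minimum_dominating_set :: "'a set \<Rightarrow> ('a \<times> 'a) set \<Rightarrow> 'a set \<Rightarrow> bool" where
  "minimum_dominating_set V E D \<longleftrightarrow>
     dominating_set V E D \<and> card D = domination_number V E"

definition well_dominated :: "'a set \<Rightarrow> ('a \<times> 'a) set \<Rightarrow> bool" where
  "well_dominated V E \<longleftrightarrow>
     (\<forall>D. minimal_dominating_set V E D \<longrightarrow> minimum_dominating_set V E D)"

definition cart_prod_edges ::
  "'a set \<Rightarrow> ('a \<times> 'a) set \<Rightarrow> 'b set \<Rightarrow> ('b \<times> 'b) set \<Rightarrow> (('a \<times> 'b) \<times> ('a \<times> 'b)) set" where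
  "cart_prod_edges VG EG VH EH =
     {((g1, h1), (g2, h2)). g1 \<in> VG \<and> g2 \<in> VG \<and> h1 \<in> VH \<and> h2 \<in> VH \<and>
        ((g1 = g2 \<and> (h1, h2) \<in> EH) \<or> (h1 = h2 \<and> (g1, g2) \<in> EG))}"

end

theory Submission
  imports Defs
begin

lemma dom_exists:
  assumes "finite V"
  shows "\<exists>D. dominating_set V E D \<and> card D = domination_number V E"
proof -
  have "\<exists>k D. dominating_set V E D \<and> card D = k"
    by (rule exI[of _ "card V"], rule exI[of _ V]) (simp add: dominating_set_def)
  then have "\<exists>D. dominating_set V E D \<and> card D = (LEAST k. \<exists>D. dominating_set V E D \<and> card D = k)"
    by (rule LeastI_ex)
  then show ?thesis unfolding domination_number_def .
qed

lemma dom_le: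
  assumes "dominating_set V E D"
  shows "domination_number V E \<le> card D"
  unfolding domination_number_def using assms by (intro Least_le) blast

lemma min_is_minimal:
  assumes "finite V" "dominating_set V E D" "card D = domination_number V E"
  shows "minimal_dominating_set V E D"
  unfolding minimal_dominating_set_def
proof (intro conjI allI impI notI)
  show "dominating_set V E D" by fact
  fix D' assume "D' \<subset> D" "dominating_set V E D'"
  have "finite D" using assms(1,2) unfolding dominating_set_def using finite_subset by blast
  then have "card D' < card D" using \<open>D' \<subset> D\<close> psubset_card_mono by blast
  moreover have "domination_number V E \<le> card D'" using dom_le \<open>dominating_set V E D'\<close> by blast
  ultimately show False using assms(3) by simp
qed

lemma private_nb:
  assumes "minimal_dominating_set V E D" "v \<in> D"
  shows "\<exists>u\<in>V. (u = v \<or> (v,u) \<in> E) \<and> u \<notin> D - {v} \<and> (\<forall>y\<in>D-{v}. (y,u) \<notin> E)"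
proof -
  have dD: "dominating_set V E D" and nd: "\<not> dominating_set V E (D - {v})"
    using assms unfolding minimal_dominating_set_def by auto
  have "D - {v} \<subseteq> V" using dD unfolding dominating_set_def by auto
  then obtain u where u: "u \<in> V" "u \<notin> D - {v}" "\<forall>y\<in>D-{v}. (y,u) \<notin> E"
    using nd unfolding dominating_set_def by auto
  from dD u(1) have "u \<in> D \<or> (\<exists>y\<in>D. (y,u) \<in> E)" unfolding dominating_set_def by auto
  then have "u = v \<or> (v,u) \<in> E" using u by auto
  then show ?thesis using u by blast
qed

lemma no_isolated:
  assumes "connected_graph V E" "card V \<ge> 2" "v \<in> V"
  shows "\<exists>w. (v,w) \<in> E"
proof -
  have "\<exists>u\<in>V. u \<noteq> v"
  proof (rule ccontr)
    assume "\<not> ?thesis"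
    then have "V \<subseteq> {v}" by auto
    then have "card V \<le> card {v}" by (intro card_mono) auto
    then have "card V \<le> 1" by simp
    then show False using assms(2) by simp
  qed
  then obtain u where "u \<in> V" "u \<noteq> v" by blast
  then have "(v,u) \<in> E\<^sup>*" using assms(1,3) unfolding connected_graph_def by blast
  then show ?thesis using \<open>u \<noteq> v\<close> by (cases rule: converse_rtranclE) auto
qed

lemma bollobas_cockayne:
  assumes sg: "simple_graph V E" and ni: "\<forall>v\<in>V. \<exists>w. (v,w) \<in> E"
  shows "\<exists>D. dominating_set V E D \<and> card D = domination_number V E \<and>
     (\<forall>v\<in>D. \<exists>u\<in>V-D. (v,u) \<in> E \<and> (\<forall>y\<in>D-{v}. (y,u) \<notin> E))"
proof -
  have fV: "finite V" and EV: "E \<subseteq> V \<times> V" and sy: "sym E" and irr: "\<forall>v. (v,v) \<notin> E"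
    using sg unfolding simple_graph_def by auto
  have fE: "finite E" using EV fV finite_subset by blast
  let ?P = "\<lambda>D. dominating_set V E D \<and> card D = domination_number V E"
  let ?f = "\<lambda>D. card (E \<inter> D \<times> D)"
  obtain D0 where "?P D0" using dom_exists fV by blast
  moreover have "\<forall>D. ?P D \<longrightarrow> ?f D < Suc (card E)"
  proof (intro allI impI)
    fix D show "?f D < Suc (card E)" using fE card_mono[of E "E \<inter> D \<times> D"] by simp
  qed
  ultimately have "\<exists>D. ?P D \<and> (\<forall>D'. ?P D' \<longrightarrow> ?f D' \<le> ?f D)"
    by (rule Lattices_Big.ex_has_greatest_nat)
  then obtain D where PD: "?P D" and mx: "\<forall>D'. ?P D' \<longrightarrow> ?f D' \<le> ?f D"
    by blast
  have dD: "dominating_set V E D" and cD: "card D = domination_number V E" using PD by auto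
  have DV: "D \<subseteq> V" using dD unfolding dominating_set_def by auto
  have fD: "finite D" using DV fV finite_subset by blast
  have mD: "minimal_dominating_set V E D" using min_is_minimal fV dD cD by blast
  have "\<forall>v\<in>D. \<exists>u\<in>V-D. (v,u) \<in> E \<and> (\<forall>y\<in>D-{v}. (y,u) \<notin> E)"
  proof (rule ballI, rule ccontr)
    fix v assume vD: "v \<in> D" and nop: "\<not> (\<exists>u\<in>V-D. (v,u) \<in> E \<and> (\<forall>y\<in>D-{v}. (y,u) \<notin> E))"
    obtain u where u: "u\<in>V" "u = v \<or> (v,u) \<in> E" "u \<notin> D - {v}" "\<forall>y\<in>D-{v}. (y,u) \<notin> E"
      using private_nb[OF mD vD] by blast
    have "u = v"
    proof (rule ccontr)
      assume "u \<noteq> v"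
      then have "(v,u) \<in> E" "u \<in> V - D" using u by auto
      then show False using nop u(4) by blast
    qed
    then have noin: "\<forall>y\<in>D. (y,v) \<notin> E" using u(4) irr by auto
    have noout: "\<forall>y\<in>D. (v,y) \<notin> E" using noin sy by (meson symD)
    obtain w where vw: "(v,w) \<in> E" using ni vD DV by blast
    have wV: "w \<in> V" using vw EV by auto
    have wD: "w \<notin> D" using vw noout by blast
    obtain x where x: "x \<in> D - {v}" "(x,w) \<in> E" using nop wV wD vw by blast
    define D' where "D' = insert w (D - {v})"
    have dD': "dominating_set V E D'"
      unfolding dominating_set_def
    proof (intro conjI ballI)
      show "D' \<subseteq> V" using DV wV D'_def by auto
      fix z assume zV: "z \<in> V"
      show "z \<in> D' \<or> (\<exists>u\<in>D'. (u, z) \<in> E)"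
      proof (cases "z \<in> D'")
        case True then show ?thesis by blast
      next
        case False
        show ?thesis
        proof (cases "z = v")
          case True
          have "(w,v) \<in> E" using vw sy by (meson symD)
          then show ?thesis using True D'_def by auto
        next
          case zv: False
          then have zD: "z \<notin> D" using False D'_def by auto
          then obtain y where y: "y \<in> D" "(y,z) \<in> E" using dD zV unfolding dominating_set_def by auto
          show ?thesis
          proof (cases "y = v")
            case False then show ?thesis using y D'_def by auto
          next
            case True
            then obtain y' where "y' \<in> D - {v}" "(y',z) \<in> E" using nop zV zD y by blast
            then show ?thesis using D'_def by auto
          qed
        qed
      qed
    qed
    have "card D' = card D" unfolding D'_def using fD wD vD
      by (simp add: card_insert_if, metis card_gt_0_iff Suc_pred empty_iff)
    then have PD': "?P D'" using dD' cD by simp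
    have "E \<inter> D \<times> D \<subset> E \<inter> D' \<times> D'"
    proof
      show "E \<inter> D \<times> D \<subseteq> E \<inter> D' \<times> D'"
        using noin noout unfolding D'_def by auto
      have "(w,x) \<in> E" using x sy by (meson symD)
      then have "(w,x) \<in> E \<inter> D' \<times> D'" using x D'_def by auto
      moreover have "(w,x) \<notin> E \<inter> D \<times> D" using wD by auto
      ultimately show "E \<inter> D \<times> D \<noteq> E \<inter> D' \<times> D'" by blast
    qed
    moreover have "finite (E \<inter> D' \<times> D')" using fE by auto
    ultimately have "?f D < ?f D'" by (rule psubset_card_mono[rotated])
    moreover have "?f D' \<le> ?f D" using mx PD' by blast
    ultimately show False by linarith
  qed
  then show ?thesis using dD cD by blast
qed

lemma prod_left:
  assumes "E \<subseteq> V \<times> V" "dominating_set V E D"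
    "\<forall>v\<in>D. \<exists>u\<in>V-D. (v,u) \<in> E \<and> (\<forall>y\<in>D-{v}. (y,u) \<notin> E)"
  shows "minimal_dominating_set (V \<times> VH) (cart_prod_edges V E VH EH) (D \<times> VH)"
  unfolding minimal_dominating_set_def
proof (intro conjI allI impI notI)
  have DV: "D \<subseteq> V" using assms(2) unfolding dominating_set_def by auto
  show "dominating_set (V \<times> VH) (cart_prod_edges V E VH EH) (D \<times> VH)"
    unfolding dominating_set_def
  proof (intro conjI ballI)
    show "D \<times> VH \<subseteq> V \<times> VH" using DV by auto
    fix p assume "p \<in> V \<times> VH"
    then obtain g h where p: "p = (g,h)" "g \<in> V" "h \<in> VH" by auto
    show "p \<in> D \<times> VH \<or> (\<exists>u\<in>D \<times> VH. (u, p) \<in> cart_prod_edges V E VH EH)"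
    proof (cases "g \<in> D")
      case True then show ?thesis using p by auto
    next
      case False
      then obtain y where "y \<in> D" "(y,g) \<in> E" using assms(2) p unfolding dominating_set_def by auto
      then have "(y,h) \<in> D \<times> VH" "((y,h),p) \<in> cart_prod_edges V E VH EH"
        using p DV unfolding cart_prod_edges_def by auto
      then show ?thesis by blast
    qed
  qed
  fix D' assume sub: "D' \<subset> D \<times> VH" and dD': "dominating_set (V \<times> VH) (cart_prod_edges V E VH EH) D'"
  then obtain v h where vh: "v \<in> D" "h \<in> VH" "(v,h) \<notin> D'" by auto
  then obtain u where u: "u \<in> V - D" "(v,u) \<in> E" "\<forall>y\<in>D-{v}. (y,u) \<notin> E" using assms(3) by blast
  have "(u,h) \<in> V \<times> VH" using u vh by auto
  moreover have "(u,h) \<notin> D'" using sub u by auto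
  ultimately have "\<exists>p\<in>D'. (p,(u,h)) \<in> cart_prod_edges V E VH EH"
    using dD' unfolding dominating_set_def by blast
  then obtain a b where ab: "(a,b) \<in> D'" "((a,b),(u,h)) \<in> cart_prod_edges V E VH EH"
    by auto
  have "a \<in> D" using ab sub by auto
  then show False using ab u vh unfolding cart_prod_edges_def by auto
qed

lemma prod_right:
  assumes "E \<subseteq> V \<times> V" "dominating_set V E D"
    "\<forall>v\<in>D. \<exists>u\<in>V-D. (v,u) \<in> E \<and> (\<forall>y\<in>D-{v}. (y,u) \<notin> E)"
  shows "minimal_dominating_set (VG \<times> V) (cart_prod_edges VG EG V E) (VG \<times> D)"
  unfolding minimal_dominating_set_def
proof (intro conjI allI impI notI)
  have DV: "D \<subseteq> V" using assms(2) unfolding dominating_set_def by auto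
  show "dominating_set (VG \<times> V) (cart_prod_edges VG EG V E) (VG \<times> D)"
    unfolding dominating_set_def
  proof (intro conjI ballI)
    show "VG \<times> D \<subseteq> VG \<times> V" using DV by auto
    fix p assume "p \<in> VG \<times> V"
    then obtain g h where p: "p = (g,h)" "g \<in> VG" "h \<in> V" by auto
    show "p \<in> VG \<times> D \<or> (\<exists>u\<in>VG \<times> D. (u, p) \<in> cart_prod_edges VG EG V E)"
    proof (cases "h \<in> D")
      case True then show ?thesis using p by auto
    next
      case False
      then obtain y where "y \<in> D" "(y,h) \<in> E" using assms(2) p unfolding dominating_set_def by auto
      then have "(g,y) \<in> VG \<times> D" "((g,y),p) \<in> cart_prod_edges VG EG V E"
        using p DV unfolding cart_prod_edges_def by auto
      then show ?thesis by blast
    qed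
  qed
  fix D' assume sub: "D' \<subset> VG \<times> D" and dD': "dominating_set (VG \<times> V) (cart_prod_edges VG EG V E) D'"
  then obtain g v where vh: "v \<in> D" "g \<in> VG" "(g,v) \<notin> D'" by auto
  then obtain u where u: "u \<in> V - D" "(v,u) \<in> E" "\<forall>y\<in>D-{v}. (y,u) \<notin> E" using assms(3) by blast
  have "(g,u) \<in> VG \<times> V" using u vh by auto
  moreover have "(g,u) \<notin> D'" using sub u by auto
  ultimately have "\<exists>p\<in>D'. (p,(g,u)) \<in> cart_prod_edges VG EG V E"
    using dD' unfolding dominating_set_def by blast
  then obtain a b where ab: "(a,b) \<in> D'" "((a,b),(g,u)) \<in> cart_prod_edges VG EG V E"
    by auto
  have "b \<in> D" using ab sub by auto
  then show False using ab u vh unfolding cart_prod_edges_def by auto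
qed

theorem proposition16:
  fixes VG :: "'a set" and EG :: "('a \<times> 'a) set"
    and VH :: "'b set" and EH :: "('b \<times> 'b) set"
  assumes "simple_graph VG EG" and "connected_graph VG EG" and "card VG \<ge> 2"
    and "simple_graph VH EH" and "connected_graph VH EH" and "card VH \<ge> 2"
    and "well_dominated (VG \<times> VH) (cart_prod_edges VG EG VH EH)"
  shows "domination_number (VG \<times> VH) (cart_prod_edges VG EG VH EH)
           = domination_number VG EG * card VH
       \<and> domination_number VG EG * card VH = domination_number VH EH * card VG"
proof -
  obtain DG where DG: "dominating_set VG EG DG" "card DG = domination_number VG EG"
    "\<forall>v\<in>DG. \<exists>u\<in>VG-DG. (v,u) \<in> EG \<and> (\<forall>y\<in>DG-{v}. (y,u) \<notin> EG)"
    using bollobas_cockayne[OF assms(1)] no_isolated[OF assms(2,3)] by blast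
  obtain DH where DH: "dominating_set VH EH DH" "card DH = domination_number VH EH"
    "\<forall>v\<in>DH. \<exists>u\<in>VH-DH. (v,u) \<in> EH \<and> (\<forall>y\<in>DH-{v}. (y,u) \<notin> EH)"
    using bollobas_cockayne[OF assms(4)] no_isolated[OF assms(5,6)] by blast
  have m1: "minimal_dominating_set (VG \<times> VH) (cart_prod_edges VG EG VH EH) (DG \<times> VH)"
    using prod_left[OF _ DG(1) DG(3)] assms(1) unfolding simple_graph_def by blast
  have m2: "minimal_dominating_set (VG \<times> VH) (cart_prod_edges VG EG VH EH) (VG \<times> DH)"
    using prod_right[OF _ DH(1) DH(3)] assms(4) unfolding simple_graph_def by blast
  have e1: "card (DG \<times> VH) = domination_number (VG \<times> VH) (cart_prod_edges VG EG VH EH)"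
    using m1 assms(7) unfolding well_dominated_def minimum_dominating_set_def by blast
  have e2: "card (VG \<times> DH) = domination_number (VG \<times> VH) (cart_prod_edges VG EG VH EH)"
    using m2 assms(7) unfolding well_dominated_def minimum_dominating_set_def by blast
  show ?thesis using e1 e2 DG(2) DH(2) by (simp add: card_cartesian_product mult.commute)
qed

end
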